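(* Let $f \in \mathbb{N}_0[x^{\pm 1}]$ with $|\operatorname{supp}(f)| \geq 3$, and suppose there is a prime number $p$ with $\frac{5f(1)}{6} - 1 \leq p \leq f(1) - 2$. Then $f$ can be written as the sum of two irreducible elements of $\mathbb{N}_0[x^{\pm 1}]$.
   Context: $\mathbb{N}_0[x^{\pm 1}]$ denotes the semiring of Laurent polynomials in $x$ with nonnegative integer coefficients; $\operatorname{supp}(f)$ is the set of exponents occurring in $f$ with nonzero coefficient, and $f(1)$ is the sum of the coefficients. Its units are exactly $x^k$, $k\in\mathbb{Z}$. An element $f$ is irreducible if it is nonzero, not a unit, and whenever $f = gh$ with $g,h \in \mathbb{N}_0[x^{\pm 1}]$ one of $g,h$ is a unit. *)

theory Defs
  imports "HOL-Library.Poly_Mapping" "HOL-Computational_Algebra.Computational_Algebra"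
begin

(* N_0[x^{+-1}] modelled as int =>_0 nat with the convolution product from Poly_Mapping *)

type_synonym laurent_nat = "int \<Rightarrow>\<^sub>0 nat"

definition eval_one :: "laurent_nat \<Rightarrow> nat" where
  "eval_one f = (\<Sum>k\<in>Poly_Mapping.keys f. Poly_Mapping.lookup f k)"

end

theory Submission
  imports Defs
begin

lemma eval_zero [simp]: "eval_one 0 = 0"
  by (simp add: eval_one_def)

lemma eval_add: "eval_one (a + b) = eval_one a + eval_one b"
  unfolding eval_one_def
  by (rule setsum_keys_plus_distrib) auto

lemma eval_single [simp]: "eval_one (Poly_Mapping.single u c) = c"
  by (simp add: eval_one_def)

lemma eval_one_1 [simp]: "eval_one 1 = 1"
  by (metis eval_single single_one)

lemma update_as_add:
  assumes "a \<notin> Poly_Mapping.keys f"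
  shows "Poly_Mapping.update a c f = f + Poly_Mapping.single a c"
  using assms
  by (intro poly_mapping_eqI) (auto simp: lookup_update lookup_add lookup_single in_keys_iff when_def)

lemma eval_single_mult: "eval_one (Poly_Mapping.single u c * y) = c * eval_one y"
proof (induction y rule: update_induct)
  case const
  then show ?case by simp
next
  case (update a b f)
  then show ?case
    by (simp add: update_as_add distrib_left eval_add mult_single algebra_simps)
qed

lemma eval_mult: "eval_one (x * y) = eval_one x * eval_one y"
proof (induction x rule: update_induct)
  case const
  then show ?case by simp
next
  case (update a b f)
  then show ?case
    by (simp add: update_as_add distrib_right eval_add eval_single_mult mult.commute[of _ "Poly_Mapping.single _ _"])
qed

lemma lookup_minus_nat: "Poly_Mapping.lookup (f - g) k = Poly_Mapping.lookup f k - Poly_Mapping.lookup (g :: int \<Rightarrow>\<^sub>0 nat) k"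
  by (simp add: minus_poly_mapping.rep_eq)

lemma lookup_single_mult:
  "Poly_Mapping.lookup (Poly_Mapping.single u c * b) t = c * Poly_Mapping.lookup (b :: int \<Rightarrow>\<^sub>0 nat) (t - u)"
proof -
  have "\<And>q. (Poly_Mapping.lookup b q when t = u + q) = (Poly_Mapping.lookup b q when q = t - u)"
    by (auto simp: when_def)
  then have e: "Sum_any (\<lambda>q. Poly_Mapping.lookup b q when t = u + q) = Poly_Mapping.lookup b (t - u)"
    by simp
  show ?thesis
    unfolding lookup_mult
    by (simp add: lookup_single when_mult e)
qed

lemma lookup_mult_ge:
  "Poly_Mapping.lookup a u * Poly_Mapping.lookup b v \<le> Poly_Mapping.lookup (a * (b :: int \<Rightarrow>\<^sub>0 nat)) (u + v)"
proof -
  define a' where "a' = a - Poly_Mapping.single u (Poly_Mapping.lookup a u)"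
  have "a = Poly_Mapping.single u (Poly_Mapping.lookup a u) + a'"
    unfolding a'_def
    by (intro poly_mapping_eqI) (auto simp: lookup_add lookup_minus_nat lookup_single when_def)
  then have "a * b = Poly_Mapping.single u (Poly_Mapping.lookup a u) * b + a' * b"
    by (metis distrib_right)
  then have "Poly_Mapping.lookup (a * b) (u + v) = Poly_Mapping.lookup a u * Poly_Mapping.lookup b v + Poly_Mapping.lookup (a' * b) (u + v)"
    by (simp add: lookup_add lookup_single_mult)
  then show ?thesis by simp
qed

lemma keys_mult_in:
  assumes "u \<in> Poly_Mapping.keys a" "v \<in> Poly_Mapping.keys (b :: int \<Rightarrow>\<^sub>0 nat)"
  shows "u + v \<in> Poly_Mapping.keys (a * b)"
proof -
  have "0 < Poly_Mapping.lookup a u * Poly_Mapping.lookup b v"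
    using assms by (simp add: in_keys_iff)
  also note lookup_mult_ge
  finally show ?thesis by (simp add: in_keys_iff)
qed


lemma unit_single: "Poly_Mapping.single u (1::nat) dvd (1 :: int \<Rightarrow>\<^sub>0 nat)"
proof
  show "(1 :: int \<Rightarrow>\<^sub>0 nat) = Poly_Mapping.single u 1 * Poly_Mapping.single (-u) 1"
    by (simp only: mult_single add.right_inverse mult_1 single_one)
qed

lemma keys_single_elem:
  assumes "Poly_Mapping.keys (a :: int \<Rightarrow>\<^sub>0 nat) \<subseteq> {u}"
  shows "a = Poly_Mapping.single u (eval_one a)"
proof (cases "u \<in> Poly_Mapping.keys a")
  case True
  then have k: "Poly_Mapping.keys a = {u}" using assms by auto
  then show ?thesis
    by (intro poly_mapping_eqI) (auto simp: eval_one_def lookup_single when_def in_keys_iff)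
next
  case False
  then have "Poly_Mapping.keys a = {}" using assms by blast
  then have "a = 0" using keys_eq_empty by blast
  then show ?thesis by simp
qed

lemma eval_one_unit:
  assumes "eval_one (a :: int \<Rightarrow>\<^sub>0 nat) = 1"
  shows "a dvd 1"
proof -
  have "Poly_Mapping.keys a \<noteq> {}" using assms by (auto simp: eval_one_def)
  then obtain u where u: "u \<in> Poly_Mapping.keys a" by blast
  have "eval_one a = Poly_Mapping.lookup a u + (\<Sum>k\<in>Poly_Mapping.keys a - {u}. Poly_Mapping.lookup a k)"
    unfolding eval_one_def using u by (simp add: sum.remove)
  moreover have "Poly_Mapping.lookup a u \<ge> 1" using u by (simp add: in_keys_iff)
  ultimately have "(\<Sum>k\<in>Poly_Mapping.keys a - {u}. Poly_Mapping.lookup a k) = 0" using assms by linarith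
  then have "\<forall>k\<in>Poly_Mapping.keys a - {u}. Poly_Mapping.lookup a k = 0" by simp
  then have "Poly_Mapping.keys a \<subseteq> {u}" by (auto simp: in_keys_iff)
  then have "a = Poly_Mapping.single u 1" using keys_single_elem assms by metis
  then show ?thesis using unit_single by simp
qed

lemma unit_eval_one:
  assumes "(a :: int \<Rightarrow>\<^sub>0 nat) dvd 1"
  shows "eval_one a = 1"
proof -
  obtain b where "1 = a * b" using assms by (auto elim: dvdE)
  then have "eval_one a * eval_one b = 1" by (metis eval_mult eval_one_1)
  then show ?thesis by simp
qed

lemma irreducible_prime_eval:
  assumes "prime (eval_one (g :: int \<Rightarrow>\<^sub>0 nat))"
  shows "irreducible g"
proof (rule irreducibleI)
  show "g \<noteq> 0" using assms by auto
  show "\<not> g dvd 1" using assms unit_eval_one by fastforce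
  fix a b assume "g = a * b"
  then have "eval_one a * eval_one b = eval_one g" by (simp add: eval_mult)
  then have "eval_one a = 1 \<or> eval_one b = 1"
    using assms by (metis prime_product)
  then show "a dvd 1 \<or> b dvd 1" using eval_one_unit by blast
qed

lemma not_single_key:
  assumes "Poly_Mapping.keys (a :: int \<Rightarrow>\<^sub>0 nat) \<subseteq> {u}" "eval_one a \<ge> 2"
    "Poly_Mapping.lookup (a * b) t = 1"
  shows False
proof -
  have "a = Poly_Mapping.single u (eval_one a)" using keys_single_elem assms(1) .
  then have "eval_one a * Poly_Mapping.lookup b (t - u) = 1"
    using assms(3) lookup_single_mult by metis
  then show False using assms(2) by simp
qed

lemma irr_crit:
  fixes h :: "int \<Rightarrow>\<^sub>0 nat"
  assumes ev: "eval_one h \<ge> 2" and t: "Poly_Mapping.lookup h t = 1"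
    and far: "\<And>s s'. s \<in> Poly_Mapping.keys h - {t} \<Longrightarrow> s' \<in> Poly_Mapping.keys h - {t} \<Longrightarrow> \<bar>s - s'\<bar> < \<bar>t - s\<bar>"
  shows "irreducible h"
proof (rule irreducibleI)
  show "h \<noteq> 0" using ev by auto
  show "\<not> h dvd 1" using ev unit_eval_one by fastforce
  fix a b assume hab: "h = a * b"
  show "a dvd 1 \<or> b dvd 1"
  proof (rule ccontr)
    assume nu: "\<not> (a dvd 1 \<or> b dvd 1)"
    have ee: "eval_one a * eval_one b = eval_one h" using hab by (simp add: eval_mult)
    have "eval_one a \<noteq> 1" "eval_one b \<noteq> 1" using nu eval_one_unit by auto
    moreover have "eval_one h \<noteq> 0" using ev by simp
    then have "eval_one a \<noteq> 0" "eval_one b \<noteq> 0" using ee by (metis mult_zero_left, metis mult_zero_right)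
    ultimately have a2: "eval_one a \<ge> 2" and b2: "eval_one b \<ge> 2" by auto
    have tk: "t \<in> Poly_Mapping.keys h" using t by (simp add: in_keys_iff)
    then obtain \<alpha> \<beta> where al: "\<alpha> \<in> Poly_Mapping.keys a" and be: "\<beta> \<in> Poly_Mapping.keys b"
      and tab: "t = \<alpha> + \<beta>"
      using keys_mult hab by blast
    have "\<not> Poly_Mapping.keys a \<subseteq> {\<alpha>}"
      using not_single_key[of a \<alpha> b t] a2 t hab by auto
    then obtain \<alpha>' where al': "\<alpha>' \<in> Poly_Mapping.keys a" "\<alpha>' \<noteq> \<alpha>" by blast
    have "\<not> Poly_Mapping.keys b \<subseteq> {\<beta>}"
      using not_single_key[of b \<beta> a t] b2 t hab by (auto simp: mult.commute)
    then obtain \<beta>' where be': "\<beta>' \<in> Poly_Mapping.keys b" "\<beta>' \<noteq> \<beta>" by blast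
    have s1: "\<alpha>' + \<beta> \<in> Poly_Mapping.keys h - {t}"
      using keys_mult_in[OF al'(1) be] hab tab al' by auto
    have s2: "\<alpha> + \<beta>' \<in> Poly_Mapping.keys h - {t}"
      using keys_mult_in[OF al be'(1)] hab tab be' by auto
    have s3: "\<alpha>' + \<beta>' \<in> Poly_Mapping.keys h"
      using keys_mult_in[OF al'(1) be'(1)] hab by auto
    show False
    proof (cases "\<alpha>' + \<beta>' = t")
      case True
      have "\<bar>(\<alpha>' + \<beta>) - (\<alpha> + \<beta>')\<bar> < \<bar>t - (\<alpha>' + \<beta>)\<bar>" using far[OF s1 s2] .
      then show False using True tab al' by (simp add: abs_if split: if_splits)
    next
      case False
      then have s3': "\<alpha>' + \<beta>' \<in> Poly_Mapping.keys h - {t}" using s3 by auto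
      have "\<bar>(\<alpha>' + \<beta>) - (\<alpha>' + \<beta>')\<bar> < \<bar>t - (\<alpha>' + \<beta>)\<bar>" using far[OF s1 s3'] .
      moreover have "\<bar>(\<alpha> + \<beta>') - (\<alpha>' + \<beta>')\<bar> < \<bar>t - (\<alpha> + \<beta>')\<bar>" using far[OF s2 s3'] .
      ultimately show False using tab by (simp add: abs_if split: if_splits)
    qed
  qed
qed


lemma sub_mass:
  fixes f :: "int \<Rightarrow>\<^sub>0 nat"
  assumes "r \<le> (\<Sum>k\<in>Poly_Mapping.keys f \<inter> X. Poly_Mapping.lookup f k)"
  shows "\<exists>h. (\<forall>k. Poly_Mapping.lookup h k \<le> Poly_Mapping.lookup f k) \<and> Poly_Mapping.keys h \<subseteq> X \<and> eval_one h = r"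
  using assms
proof (induction r)
  case 0
  show ?case by (rule exI[of _ 0]) simp
next
  case (Suc r)
  then obtain h where le: "\<forall>k. Poly_Mapping.lookup h k \<le> Poly_Mapping.lookup f k"
    and kx: "Poly_Mapping.keys h \<subseteq> X" and ev: "eval_one h = r" by auto
  have "x \<in> Poly_Mapping.keys f" if "x \<in> Poly_Mapping.keys h" for x
    using le[rule_format, of x] that by (auto simp: in_keys_iff)
  then have khf: "Poly_Mapping.keys h \<subseteq> Poly_Mapping.keys f \<inter> X"
    using kx by blast
  have "\<exists>k\<in>Poly_Mapping.keys f \<inter> X. Poly_Mapping.lookup h k < Poly_Mapping.lookup f k"
  proof (rule ccontr)
    assume "\<not> ?thesis"
    then have eq: "\<forall>k\<in>Poly_Mapping.keys f \<inter> X. Poly_Mapping.lookup h k = Poly_Mapping.lookup f k"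
      using le by (meson le_neq_implies_less)
    have "eval_one h = (\<Sum>k\<in>Poly_Mapping.keys f \<inter> X. Poly_Mapping.lookup h k)"
      unfolding eval_one_def
      by (rule sum.mono_neutral_left) (use khf in \<open>auto simp: in_keys_iff\<close>)
    also have "\<dots> = (\<Sum>k\<in>Poly_Mapping.keys f \<inter> X. Poly_Mapping.lookup f k)"
      using eq by (intro sum.cong) auto
    finally show False using ev Suc.prems by simp
  qed
  then obtain k where k: "k \<in> Poly_Mapping.keys f \<inter> X" "Poly_Mapping.lookup h k < Poly_Mapping.lookup f k"
    by blast
  define h' where "h' = h + Poly_Mapping.single k 1"
  have "\<forall>j. Poly_Mapping.lookup h' j \<le> Poly_Mapping.lookup f j"
    using le k unfolding h'_def by (auto simp: lookup_add lookup_single when_def)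
  moreover have "Poly_Mapping.keys h' \<subseteq> X"
    using keys_add[of h "Poly_Mapping.single k 1"] kx k unfolding h'_def by auto
  moreover have "eval_one h' = Suc r" unfolding h'_def by (simp add: eval_add ev)
  ultimately show ?case by blast
qed

lemma build:
  fixes f :: "int \<Rightarrow>\<^sub>0 nat"
  assumes tK: "t \<in> Poly_Mapping.keys f" and tX: "t \<notin> X"
    and mass: "m - 1 \<le> (\<Sum>k\<in>Poly_Mapping.keys f \<inter> X. Poly_Mapping.lookup f k)"
    and far: "\<And>s s'. s \<in> Poly_Mapping.keys f \<inter> X \<Longrightarrow> s' \<in> Poly_Mapping.keys f \<inter> X \<Longrightarrow> \<bar>s - s'\<bar> < \<bar>t - s\<bar>"
    and m2: "2 \<le> m" and pr: "prime (eval_one f - m)" and mn: "m \<le> eval_one f"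
  shows "\<exists>g h :: int \<Rightarrow>\<^sub>0 nat. irreducible g \<and> irreducible h \<and> f = g + h"
proof -
  obtain hX where le: "\<forall>k. Poly_Mapping.lookup hX k \<le> Poly_Mapping.lookup f k"
    and kx: "Poly_Mapping.keys hX \<subseteq> X" and ev: "eval_one hX = m - 1"
    using sub_mass[OF mass] by blast
  have "x \<in> Poly_Mapping.keys f" if "x \<in> Poly_Mapping.keys hX" for x
    using le[rule_format, of x] that by (auto simp: in_keys_iff)
  then have khf: "Poly_Mapping.keys hX \<subseteq> Poly_Mapping.keys f \<inter> X"
    using kx by blast
  have hXt: "Poly_Mapping.lookup hX t = 0" using kx tX by (auto simp: in_keys_iff)
  define h where "h = hX + Poly_Mapping.single t 1"
  have lh: "Poly_Mapping.lookup h k = Poly_Mapping.lookup hX k + (if k = t then 1 else 0)" for k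
    unfolding h_def by (auto simp: lookup_add lookup_single when_def)
  have ht: "Poly_Mapping.lookup h t = 1" using lh hXt by simp
  have kh: "Poly_Mapping.keys h - {t} \<subseteq> Poly_Mapping.keys hX"
    using lh by (auto simp: in_keys_iff split: if_splits)
  have evh: "eval_one h = m" unfolding h_def using ev m2 by (simp add: eval_add)
  have hle: "Poly_Mapping.lookup h k \<le> Poly_Mapping.lookup f k" for k
    using lh le hXt tK by (cases "k = t") (auto simp: in_keys_iff)
  have irrh: "irreducible h"
  proof (rule irr_crit[OF _ ht])
    show "2 \<le> eval_one h" using evh m2 by simp
    fix s s' assume "s \<in> Poly_Mapping.keys h - {t}" "s' \<in> Poly_Mapping.keys h - {t}"
    then show "\<bar>s - s'\<bar> < \<bar>t - s\<bar>" using kh khf far by blast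
  qed
  define g where "g = f - h"
  have fgh: "f = g + h"
    unfolding g_def by (intro poly_mapping_eqI) (simp add: lookup_add lookup_minus_nat hle)
  then have "eval_one f = eval_one g + m" using evh by (metis eval_add)
  then have "eval_one g = eval_one f - m" by simp
  then have "irreducible g" using pr irreducible_prime_eval by simp
  then show ?thesis using irrh fgh by blast
qed


theorem lemma2p10:
  fixes f :: laurent_nat and p :: nat
  assumes "card (Poly_Mapping.keys f) \<ge> 3"
    and "prime p"
    and "5 * real (eval_one f) / 6 - 1 \<le> real p"
    and "real p \<le> real (eval_one f) - 2"
  shows "\<exists>g h :: laurent_nat. irreducible g \<and> irreducible h \<and> f = g + h"
proof -
  define K where "K = Poly_Mapping.keys f"
  define n where "n = eval_one f"
  have fin: "finite K" unfolding K_def by simp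
  have c3: "card K \<ge> 3" using assms(1) unfolding K_def .
  then have ne: "K \<noteq> {}" by auto
  define lo where "lo = Min K"
  define hi where "hi = Max K"
  have loK: "lo \<in> K" and hiK: "hi \<in> K" using fin ne unfolding lo_def hi_def by auto
  have bnd: "lo \<le> s \<and> s \<le> hi" if "s \<in> K" for s
    using fin that unfolding lo_def hi_def by auto
  have lohi: "lo < hi"
  proof (rule ccontr)
    assume "\<not> lo < hi"
    then have "K \<subseteq> {lo}" using bnd by fastforce
    then have "card K \<le> card {lo}" by (intro card_mono) auto
    then have "card K \<le> 1" by simp
    then show False using c3 by simp
  qed
  define L where "L = {s::int. 2 * s < lo + hi}"
  define R where "R = {s::int. 2 * s > lo + hi}"
  define M where "M = {s::int. 2 * s = lo + hi}"
  define mass where "mass X = (\<Sum>k\<in>K \<inter> X. Poly_Mapping.lookup f k)" for X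
  have KU: "K = (K \<inter> L) \<union> ((K \<inter> R) \<union> (K \<inter> M))" unfolding L_def R_def M_def by auto
  have "n = (\<Sum>k\<in>(K \<inter> L) \<union> ((K \<inter> R) \<union> (K \<inter> M)). Poly_Mapping.lookup f k)"
    unfolding n_def eval_one_def K_def[symmetric] using KU by simp
  also have "\<dots> = mass L + (mass R + mass M)"
    unfolding mass_def using fin
    by (subst sum.union_disjoint; (subst sum.union_disjoint)?) (auto simp: L_def R_def M_def)
  finally have nsum: "n = mass L + mass R + mass M" by simp
  define m where "m = n - p"
  have p2: "p + 2 \<le> n" using assms(4) unfolding n_def by linarith
  have p5: "5 * n \<le> 6 * p + 6" using assms(3) unfolding n_def by linarith
  have mp: "m + p = n" using p2 unfolding m_def by simp
  have m2: "2 \<le> m" using p2 mp by simp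
  have pr: "prime (eval_one f - m)" using mp assms(2) unfolding n_def by (metis add_diff_cancel_left')
  have mn: "m \<le> eval_one f" using mp unfolding n_def by simp
  show ?thesis
  proof (cases "m - 1 \<le> mass L")
    case True
    show ?thesis
    proof (rule build[OF _ _ _ _ m2 pr mn])
      show "hi \<in> Poly_Mapping.keys f" using hiK K_def by simp
      show "hi \<notin> L" using lohi L_def by simp
      show "m - 1 \<le> (\<Sum>k\<in>Poly_Mapping.keys f \<inter> L. Poly_Mapping.lookup f k)"
        using True unfolding mass_def K_def .
      fix s s' assume "s \<in> Poly_Mapping.keys f \<inter> L" "s' \<in> Poly_Mapping.keys f \<inter> L"
      then have "lo \<le> s" "lo \<le> s'" "2 * s < lo + hi" "2 * s' < lo + hi"
        using bnd unfolding K_def L_def by auto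
      then show "\<bar>s - s'\<bar> < \<bar>hi - s\<bar>" using lohi by (auto simp: abs_if)
    qed
  next
    case F1: False
    show ?thesis
    proof (cases "m - 1 \<le> mass R")
      case True
      show ?thesis
      proof (rule build[OF _ _ _ _ m2 pr mn])
        show "lo \<in> Poly_Mapping.keys f" using loK K_def by simp
        show "lo \<notin> R" using lohi R_def by simp
        show "m - 1 \<le> (\<Sum>k\<in>Poly_Mapping.keys f \<inter> R. Poly_Mapping.lookup f k)"
          using True unfolding mass_def K_def .
        fix s s' assume "s \<in> Poly_Mapping.keys f \<inter> R" "s' \<in> Poly_Mapping.keys f \<inter> R"
        then have "s \<le> hi" "s' \<le> hi" "2 * s > lo + hi" "2 * s' > lo + hi"
          using bnd unfolding K_def R_def by auto
        then show "\<bar>s - s'\<bar> < \<bar>lo - s\<bar>" using lohi by (auto simp: abs_if)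
      qed
    next
      case F2: False
      show ?thesis
      proof (cases "m - 1 \<le> mass M")
        case True
        show ?thesis
        proof (rule build[OF _ _ _ _ m2 pr mn])
          show "lo \<in> Poly_Mapping.keys f" using loK K_def by simp
          show "lo \<notin> M" using lohi M_def by simp
          show "m - 1 \<le> (\<Sum>k\<in>Poly_Mapping.keys f \<inter> M. Poly_Mapping.lookup f k)"
            using True unfolding mass_def K_def .
          fix s s' assume "s \<in> Poly_Mapping.keys f \<inter> M" "s' \<in> Poly_Mapping.keys f \<inter> M"
          then have "2 * s = lo + hi" "2 * s' = lo + hi"
            unfolding M_def by auto
          then show "\<bar>s - s'\<bar> < \<bar>lo - s\<bar>" using lohi by (auto simp: abs_if)
        qed
      next
        case False
        then show ?thesis using F1 F2 nsum p5 mp m2 by linarith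
      qed
    qed
  qed
qed

end
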